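(* Let $\mathbb{K}$ be a field and let $\mathcal F=(f_1,\dots,f_t)$, $t\ge2$, be polynomials in $\mathbb{K}[x,y]$ of $y$-degree at most $d_y$ generating an ideal $I$ of dimension zero. Write $f_i=\sum_{j=0}^{d_y} f_{i,j}y^j$ with $f_{i,j}\in\mathbb{K}[x]$. Let $D\ge\Delta(\mathcal F)$ be an integer, and let $\mathbf S=[\mathbf S_1\cdots\mathbf S_t]\in\mathbb{K}[x]^{(d_y+D)\times tD}$, where $\mathbf S_i\in\mathbb{K}[x]^{(d_y+D)\times D}$ is the matrix whose $\ell$-th column ($\ell=1,\dots,D$) has the entries $f_{i,d_y},f_{i,d_y-1},\dots,f_{i,0}$ in rows $\ell,\ell+1,\dots,\ell+d_y$ and zeros elsewhere (equivalently, the $\ell$-th column is $\pi_{d_y+D}(y^{D-\ell}f_i)$). Let $c_1,\dots,c_K$ be the nonzero columns of the Hermite normal form $\mathbf H$ of $\mathbf S$. Then there exists $K'\le K$ such that $\pi_{d_y+D}^{-1}(c_{K'})$ is monic in $y$ (i.e., its coefficient of highest power of $y$ is $1$); and, with $K'$ the largest such integer, $\pi_{d_y+D}^{-1}(c_K),\pi_{d_y+D}^{-1}(c_{K-1}),\dots,\pi_{d_y+D}^{-1}(c_{K'})$ is the detaching basis of $I$ in degree $n_0$ (namely $\pi_{d_y+D}^{-1}(c_{K-i})=A_i$ for $i=0,\dots,n_0$).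
   Context: Let $\mathbb{K}$ be a field. For an ideal $I\subseteq\mathbb{K}[x,y]$, let $\mathcal G=(g_0,\dots,g_s)$ be its reduced minimal Gröbner basis for the lexicographic order with $x\prec y$, listed in decreasing order, and $n_i=\deg_y(g_i)$ (so $n_0>\cdots>n_s$). Define $A_0,A_1,\dots$ recursively: for $0\le i<n_s$, $A_i=0$; if $n_k=i$ for some $k$, $A_i=g_k$; otherwise $A_i$ is obtained from $yA_{i-1}$ by replacing its part of $y$-degree $<i$ by the normal form of that part modulo $\mathcal G$. For $n\ge n_0$, the detaching basis of $I$ in degree $n$ is $(A_{n_s},\dots,A_n)$. For $\mathcal F=(f_1,\dots,f_t)$ generating $I$, $\Delta(\mathcal F)$ is the minimal integer $\Delta$ such that for each $i=n_s,\dots,n_0$ there exist $w_{i,1},\dots,w_{i,t}\in\mathbb{K}[x,y]$, all of $y$-degree less than $\Delta$, with $A_i=\sum_{j=1}^t w_{i,j}f_j$. For $n\ge1$, $\pi_n$ is the $\mathbb{K}[x]$-module isomorphism from $\{f\in\mathbb{K}[x,y]:\deg_y f<n\}$ to $\mathbb{K}[x]^n$ sending $f_0+f_1y+\cdots+f_{n-1}y^{n-1}$ to $[f_{n-1},\dots,f_1,f_0]^\top$. Hermite normal forms are with respect to column operations: the Hermite normal form of $\mathbf S\in\mathbb{K}[x]^{n\times m}$ is the unique matrix $\mathbf H=\mathbf S\mathbf U$, with $\mathbf U\in\mathbb{K}[x]^{m\times m}$ unimodular, such that its nonzero columns are the first ones, it is in lower echelon form (the index of the first nonzero entry, the pivot,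 of each nonzero column strictly increases with the column index), every pivot is monic in $x$, and in the row of each pivot all entries in earlier columns have $x$-degree less than that pivot. *)

theory Defs
  imports "HOL-Computational_Algebra.Polynomial" "Jordan_Normal_Form.Matrix"
begin

text \<open>Bivariate polynomials K[x,y] are represented as 'a poly poly:
  polynomials in the (outer) variable y with coefficients in K[x].
  The monomial x^b y^a is represented by the exponent pair (a, b) = (y-exponent, x-exponent).\<close>

type_synonym 'a bipoly = "'a poly poly"

definition ideal_gen :: "'a::comm_ring_1 bipoly list \<Rightarrow> 'a bipoly set" where
  "ideal_gen F = {p. \<exists>w. p = (\<Sum>j<length F. w j * F ! j)}"

text \<open>Zero-dimensional ideal: proper, with K[x,y]/I finite-dimensional over K.\<close>
definition zero_dim :: "'a::field bipoly set \<Rightarrow> bool" where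
  "zero_dim I \<longleftrightarrow> 1 \<notin> I \<and>
     (\<exists>B. finite B \<and> (\<forall>p. \<exists>c. p - (\<Sum>b\<in>B. [:[:c b:]:] * b) \<in> I))"

definition monomials :: "'a::zero bipoly \<Rightarrow> (nat \<times> nat) set" where
  "monomials p = {(a, b). coeff (coeff p a) b \<noteq> 0}"

text \<open>Leading monomial for lex order with x < y: highest y-degree, then highest x-degree.\<close>
definition lm :: "'a::zero bipoly \<Rightarrow> nat \<times> nat" where
  "lm p = (degree p, degree (lead_coeff p))"

definition lcoeff :: "'a::zero bipoly \<Rightarrow> 'a" where
  "lcoeff p = lead_coeff (lead_coeff p)"

definition mon_dvd :: "nat \<times> nat \<Rightarrow> nat \<times> nat \<Rightarrow> bool" where
  "mon_dvd m n \<longleftrightarrow> fst m \<le> fst n \<and> snd m \<le> snd n"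

definition lex_less :: "nat \<times> nat \<Rightarrow> nat \<times> nat \<Rightarrow> bool" where
  "lex_less m n \<longleftrightarrow> fst m < fst n \<or> (fst m = fst n \<and> snd m < snd n)"

definition reduced_lex_GB :: "'a::field bipoly list \<Rightarrow> 'a bipoly set \<Rightarrow> bool" where
  "reduced_lex_GB G I \<longleftrightarrow>
     G \<noteq> [] \<and> distinct G \<and> set G \<subseteq> I \<and> 0 \<notin> set G \<and>
     (\<forall>f\<in>I. f \<noteq> 0 \<longrightarrow> (\<exists>g\<in>set G. mon_dvd (lm g) (lm f))) \<and>
     (\<forall>g\<in>set G. lcoeff g = 1) \<and>
     (\<forall>g\<in>set G. \<forall>g'\<in>set G. g' \<noteq> g \<longrightarrow> (\<forall>m\<in>monomials g. \<not> mon_dvd (lm g') m)) \<and>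
     (\<forall>i j. i < j \<longrightarrow> j < length G \<longrightarrow> lex_less (lm (G ! j)) (lm (G ! i)))"

definition NF :: "'a::field bipoly list \<Rightarrow> 'a bipoly \<Rightarrow> 'a bipoly" where
  "NF G p = (THE r. p - r \<in> ideal_gen G \<and>
                 (\<forall>m\<in>monomials r. \<forall>g\<in>set G. \<not> mon_dvd (lm g) m))"

definition ytrunc :: "nat \<Rightarrow> 'a::comm_ring_1 bipoly \<Rightarrow> 'a bipoly" where
  "ytrunc i h = (\<Sum>j<i. monom (coeff h j) j)"

definition nS :: "'a::zero bipoly list \<Rightarrow> nat" where
  "nS G = degree (last G)"

definition n0 :: "'a::zero bipoly list \<Rightarrow> nat" where
  "n0 G = degree (G ! 0)"

fun detach :: "'a::field bipoly list \<Rightarrow> nat \<Rightarrow> 'a bipoly" where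
  "detach G 0 =
     (if 0 < nS G then 0
      else if (\<exists>k<length G. degree (G ! k) = 0)
        then G ! (SOME k. k < length G \<and> degree (G ! k) = 0) else 0)"
| "detach G (Suc j) =
     (if Suc j < nS G then 0
      else if (\<exists>k<length G. degree (G ! k) = Suc j)
        then G ! (SOME k. k < length G \<and> degree (G ! k) = Suc j)
      else (let h = monom 1 1 * detach G j
            in (h - ytrunc (Suc j) h) + NF G (ytrunc (Suc j) h)))"

definition Delta :: "'a::field bipoly list \<Rightarrow> 'a bipoly list \<Rightarrow> nat" where
  "Delta F G = (LEAST \<Delta>. \<forall>i\<in>{nS G..n0 G}. \<exists>w.
        (\<forall>j<length F. degree (w j) < \<Delta>) \<and> detach G i = (\<Sum>j<length F. w j * F ! j))"

text \<open>pi_n : f_0 + ... + f_{n-1} y^{n-1} \<mapsto> [f_{n-1},...,f_0]^T (0-indexed rows).\<close>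
definition pi_vec :: "nat \<Rightarrow> 'a::zero bipoly \<Rightarrow> 'a poly vec" where
  "pi_vec n f = vec n (\<lambda>r. coeff f (n - 1 - r))"

definition pi_inv :: "nat \<Rightarrow> 'a::comm_ring_1 poly vec \<Rightarrow> 'a bipoly" where
  "pi_inv n v = (\<Sum>r<n. monom (v $ r) (n - 1 - r))"

text \<open>S = [S_1 ... S_t]; column l (1-based) of S_i is pi_{dy+D}(y^{D-l} f_i).
  0-based column c corresponds to i = c div D + 1, l = c mod D + 1.\<close>
definition S_mat :: "'a::comm_ring_1 bipoly list \<Rightarrow> nat \<Rightarrow> nat \<Rightarrow> 'a poly mat" where
  "S_mat F dy D = mat (dy + D) (length F * D)
     (\<lambda>(r, c). coeff (monom 1 (D - 1 - c mod D) * F ! (c div D)) (dy + D - 1 - r))"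

definition piv :: "'a::zero mat \<Rightarrow> nat \<Rightarrow> nat" where
  "piv H j = (LEAST r. r < dim_row H \<and> H $$ (r, j) \<noteq> 0)"

definition hnf_shape :: "'a::field poly mat \<Rightarrow> bool" where
  "hnf_shape H \<longleftrightarrow> (\<exists>K\<le>dim_col H.
      (\<forall>j<dim_col H. col H j = 0\<^sub>v (dim_row H) \<longleftrightarrow> K \<le> j) \<and>
      (\<forall>j1 j2. j1 < j2 \<longrightarrow> j2 < K \<longrightarrow> piv H j1 < piv H j2) \<and>
      (\<forall>j<K. lead_coeff (H $$ (piv H j, j)) = 1 \<and>
         (\<forall>j'<j. H $$ (piv H j, j') = 0 \<or>
                 degree (H $$ (piv H j, j')) < degree (H $$ (piv H j, j)))))"

definition hermite_nf :: "'a::field poly mat \<Rightarrow> 'a poly mat \<Rightarrow> bool" where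
  "hermite_nf S H \<longleftrightarrow>
     (\<exists>U V. U \<in> carrier_mat (dim_col S) (dim_col S) \<and> V \<in> carrier_mat (dim_col S) (dim_col S) \<and>
        U * V = 1\<^sub>m (dim_col S) \<and> V * U = 1\<^sub>m (dim_col S) \<and> H = S * U) \<and> hnf_shape H"

definition nz_cols :: "'a::zero mat \<Rightarrow> nat" where
  "nz_cols H = card {j. j < dim_col H \<and> col H j \<noteq> 0\<^sub>v (dim_row H)}"

end

theory Submission
  imports Defs "HOL-Library.Product_Lexorder" "Jordan_Normal_Form.Determinant"
begin

lemma ideal_gen_add: "p \<in> ideal_gen F \<Longrightarrow> q \<in> ideal_gen F \<Longrightarrow> p + q \<in> ideal_gen F"
proof -
  assume "p \<in> ideal_gen F" "q \<in> ideal_gen F"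
  then obtain w w' where "p = (\<Sum>j<length F. w j * F ! j)" "q = (\<Sum>j<length F. w' j * F ! j)"
    unfolding ideal_gen_def by auto
  then have "p + q = (\<Sum>j<length F. (w j + w' j) * F ! j)"
    by (simp add: sum.distrib distrib_right)
  then show ?thesis unfolding ideal_gen_def by (intro CollectI exI)
qed

lemma ideal_gen_mult: "p \<in> ideal_gen F \<Longrightarrow> c * p \<in> ideal_gen F"
proof -
  assume "p \<in> ideal_gen F"
  then obtain w where "p = (\<Sum>j<length F. w j * F ! j)"
    unfolding ideal_gen_def by auto
  then have "c * p = (\<Sum>j<length F. (c * w j) * F ! j)"
    by (simp add: sum_distrib_left mult.assoc)
  then show ?thesis unfolding ideal_gen_def by (intro CollectI exI)
qed

lemma ideal_gen_zero: "0 \<in> ideal_gen F"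
  unfolding ideal_gen_def by (rule CollectI, rule exI[of _ "\<lambda>j. 0"], simp)

lemma ideal_gen_uminus: "p \<in> ideal_gen F \<Longrightarrow> - p \<in> ideal_gen F"
  using ideal_gen_mult[of p F "-1"] by simp

lemma ideal_gen_diff: "p \<in> ideal_gen F \<Longrightarrow> q \<in> ideal_gen F \<Longrightarrow> p - q \<in> ideal_gen F"
  using ideal_gen_add[of p F "-q"] ideal_gen_uminus[of q F] by simp

lemma ideal_gen_sum: "(\<And>i. i \<in> A \<Longrightarrow> f i \<in> ideal_gen F) \<Longrightarrow> sum f A \<in> ideal_gen F"
proof (induction A rule: infinite_finite_induct)
  case (infinite A) then show ?case by (simp add: ideal_gen_zero)
next
  case empty then show ?case by (simp add: ideal_gen_zero)
next
  case (insert x A) then show ?case by (simp add: ideal_gen_add)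
qed

lemma ideal_gen_member: "j < length F \<Longrightarrow> F ! j \<in> ideal_gen F"
  unfolding ideal_gen_def
proof (rule CollectI, rule exI[of _ "\<lambda>i. if i = j then 1 else 0"])
  assume j: "j < length F"
  have "(\<Sum>i<length F. (if i = j then 1 else 0) * F ! i) = (\<Sum>i<length F. if i = j then F ! i else 0)"
    by (rule sum.cong) auto
  also have "\<dots> = F ! j" using j by (simp add: sum.delta')
  finally show "F ! j = (\<Sum>i<length F. (if i = j then 1 else 0) * F ! i)" by simp
qed

lemma ideal_gen_mono: "set G \<subseteq> ideal_gen F \<Longrightarrow> ideal_gen G \<subseteq> ideal_gen F"
proof
  fix p assume s: "set G \<subseteq> ideal_gen F" and "p \<in> ideal_gen G"
  then obtain w where p: "p = (\<Sum>j<length G. w j * G ! j)" unfolding ideal_gen_def by auto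
  show "p \<in> ideal_gen F" unfolding p
    by (rule ideal_gen_sum, rule ideal_gen_mult, use s in auto)
qed

lemma lm_in_monomials: "p \<noteq> 0 \<Longrightarrow> lm p \<in> monomials p"
  unfolding lm_def monomials_def by simp

lemma monomials_diff: "monomials (p - q) \<subseteq> monomials p \<union> monomials q"
  unfolding monomials_def by auto

lemma monomials_fst: "\<mu> \<in> monomials p \<Longrightarrow> fst \<mu> \<le> degree p"
  unfolding monomials_def by (auto intro: le_degree)

lemma finite_monomials: "finite (monomials p)"
proof -
  have "monomials p \<subseteq> {..degree p} \<times> {..Max ((\<lambda>a. degree (coeff p a)) ` {..degree p})}"
  proof
    fix \<mu> assume m: "\<mu> \<in> monomials p"
    obtain a b where ab: "\<mu> = (a, b)" by force
    from m ab have c: "coeff (coeff p a) b \<noteq> 0" unfolding monomials_def by auto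
    then have "coeff p a \<noteq> 0" by auto
    then have a: "a \<le> degree p" by (rule le_degree)
    have "b \<le> degree (coeff p a)" using c by (rule le_degree)
    also have "\<dots> \<le> Max ((\<lambda>a. degree (coeff p a)) ` {..degree p})"
      using a by (intro Max_ge) auto
    finally show "\<mu> \<in> {..degree p} \<times> {..Max ((\<lambda>a. degree (coeff p a)) ` {..degree p})}"
      using a ab by auto
  qed
  then show ?thesis by (rule finite_subset) auto
qed

definition red :: "'a::zero bipoly list \<Rightarrow> nat \<times> nat \<Rightarrow> bool" where
  "red G \<mu> \<longleftrightarrow> (\<exists>g\<in>set G. mon_dvd (lm g) \<mu>)"

lemma reduced_zero:
  assumes GB: "reduced_lex_GB G I" and f: "f \<in> I" and r: "\<forall>\<mu>\<in>monomials f. \<not> red G \<mu>"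
  shows "f = 0"
proof (rule ccontr)
  assume "f \<noteq> 0"
  with GB f obtain g where "g \<in> set G" "mon_dvd (lm g) (lm f)" unfolding reduced_lex_GB_def by blast
  with r lm_in_monomials[OF \<open>f \<noteq> 0\<close>] show False unfolding red_def by blast
qed


lemma coeff_coeff_shift:
  "coeff (coeff (monom (monom c s) t * g) k) l =
    (if t \<le> k \<and> s \<le> l then c * coeff (coeff g (k - t)) (l - s) else 0)"
  by (simp add: coeff_monom_mult)

lemma red_step:
  fixes g :: "'a::field bipoly" and c :: 'a
  assumes g1: "lcoeff g = 1" and dv: "mon_dvd (lm g) (m, e)"
  defines "q \<equiv> monom (monom c (e - degree (lead_coeff g))) (m - degree g) * g"
  shows "coeff (coeff q m) e = c" and "\<forall>\<nu>\<in>monomials q. \<nu> \<le> (m, e)" and "degree q \<le> m"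
proof -
  let ?n = "degree g" and ?b = "degree (lead_coeff g)"
  have nm: "?n \<le> m" and be: "?b \<le> e" using dv unfolding mon_dvd_def lm_def by auto
  show "coeff (coeff q m) e = c" unfolding q_def coeff_coeff_shift using nm be g1
    by (simp add: lcoeff_def)
  show "\<forall>\<nu>\<in>monomials q. \<nu> \<le> (m, e)"
  proof
    fix \<nu> assume "\<nu> \<in> monomials q"
    then obtain k l where \<nu>: "\<nu> = (k, l)" and c: "coeff (coeff q k) l \<noteq> 0"
      unfolding monomials_def by auto
    from c have k1: "m - ?n \<le> k" and l1: "e - ?b \<le> l"
      and c2: "coeff (coeff g (k - (m - ?n))) (l - (e - ?b)) \<noteq> 0"
      unfolding q_def coeff_coeff_shift by (auto split: if_splits)
    from c2 have "coeff g (k - (m - ?n)) \<noteq> 0" by auto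
    then have "k - (m - ?n) \<le> ?n" by (rule le_degree)
    then have km: "k \<le> m" using k1 nm by linarith
    show "\<nu> \<le> (m, e)"
    proof (cases "k = m")
      case True
      then have "k - (m - ?n) = ?n" using nm by simp
      with c2 have "coeff (lead_coeff g) (l - (e - ?b)) \<noteq> 0" by simp
      then have "l - (e - ?b) \<le> ?b" by (rule le_degree)
      then have "l \<le> e" using l1 be by linarith
      then show ?thesis using True \<nu> by simp
    next
      case False then show ?thesis using km \<nu> by simp
    qed
  qed
  have "degree q \<le> degree (monom (monom c (e - ?b)) (m - ?n) :: 'a bipoly) + ?n"
    unfolding q_def by (rule degree_mult_le)
  also have "\<dots> \<le> (m - ?n) + ?n" by (simp add: degree_monom_le)
  also have "\<dots> = m" using nm by simp
  finally show "degree q \<le> m" .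
qed

lemma nf_exists_aux:
  fixes G :: "'a::field bipoly list"
  assumes GB: "reduced_lex_GB G I"
  shows "\<forall>p. (\<forall>\<mu>\<in>monomials p. red G \<mu> \<longrightarrow> \<mu> < \<beta>) \<longrightarrow>
     (\<exists>r. p - r \<in> ideal_gen G \<and> (\<forall>\<mu>\<in>monomials r. \<not> red G \<mu>) \<and> degree r \<le> degree p)"
proof (induction \<beta> rule: less_induct)
  case (less \<beta>)
  show ?case
  proof (intro allI impI)
    fix p :: "'a bipoly"
    assume below: "\<forall>\<mu>\<in>monomials p. red G \<mu> \<longrightarrow> \<mu> < \<beta>"
    let ?R = "{\<mu>\<in>monomials p. red G \<mu>}"
    show "\<exists>r. p - r \<in> ideal_gen G \<and> (\<forall>\<mu>\<in>monomials r. \<not> red G \<mu>) \<and> degree r \<le> degree p"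
    proof (cases "?R = {}")
      case True
      then show ?thesis by (intro exI[of _ p]) (auto simp: ideal_gen_zero)
    next
      case False
      have fin: "finite ?R" using finite_monomials[of p] by simp
      define \<mu> where "\<mu> = Max ?R"
      have \<mu>R: "\<mu> \<in> ?R" unfolding \<mu>_def using fin False by (rule Max_in)
      have \<mu>max: "\<And>\<nu>. \<nu> \<in> ?R \<Longrightarrow> \<nu> \<le> \<mu>" unfolding \<mu>_def using fin by auto
      obtain m e where \<mu>me: "\<mu> = (m, e)" by force
      from \<mu>R obtain g where gG: "g \<in> set G" and dv: "mon_dvd (lm g) (m, e)"
        unfolding red_def \<mu>me by auto
      have g1: "lcoeff g = 1" using GB gG unfolding reduced_lex_GB_def by auto
      define c where "c = coeff (coeff p m) e"
      define q where "q = monom (monom c (e - degree (lead_coeff g))) (m - degree g) * g"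
      note rs = red_step[OF g1 dv, of c, folded q_def]
      have qI: "q \<in> ideal_gen G" unfolding q_def
        using gG by (auto intro!: ideal_gen_mult ideal_gen_member simp: in_set_conv_nth)
      define p' where "p' = p - q"
      have mdeg: "m \<le> degree p" using \<mu>R \<mu>me monomials_fst by fastforce
      have below': "\<forall>\<nu>\<in>monomials p'. red G \<nu> \<longrightarrow> \<nu> < \<mu>"
      proof (intro ballI impI)
        fix \<nu> assume n1: "\<nu> \<in> monomials p'" and n2: "red G \<nu>"
        have ne: "\<nu> \<noteq> \<mu>" using n1 rs(1) unfolding p'_def monomials_def \<mu>me c_def by auto
        from n1 have "\<nu> \<in> monomials p \<union> monomials q" unfolding p'_def using monomials_diff by blast
        then have "\<nu> \<le> \<mu>"
        proof
          assume "\<nu> \<in> monomials p" then show ?thesis using \<mu>max n2 by blast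
        next
          assume "\<nu> \<in> monomials q" then show ?thesis using rs(2) \<mu>me by blast
        qed
        then show "\<nu> < \<mu>" using ne by simp
      qed
      have "\<mu> < \<beta>" using below \<mu>R by auto
      from less.IH[OF this] below' obtain r where
        r: "p' - r \<in> ideal_gen G" "\<forall>\<mu>\<in>monomials r. \<not> red G \<mu>" "degree r \<le> degree p'" by blast
      have "p - r = (p' - r) + q" unfolding p'_def by simp
      then have "p - r \<in> ideal_gen G" using ideal_gen_add[OF r(1) qI] by metis
      moreover have "degree p' \<le> degree p" unfolding p'_def
        using degree_diff_le[of p "degree p" q] rs(3) mdeg by simp
      ultimately show ?thesis using r by (intro exI[of _ r]) auto
    qed
  qed
qed

lemma nf_exists:
  fixes G :: "'a::field bipoly list"
  assumes GB: "reduced_lex_GB G I"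
  shows "\<exists>r. p - r \<in> ideal_gen G \<and> (\<forall>\<mu>\<in>monomials r. \<not> red G \<mu>) \<and> degree r \<le> degree p"
proof -
  have "\<forall>\<mu>\<in>monomials p. red G \<mu> \<longrightarrow> \<mu> < (degree p + 1, 0)"
    using monomials_fst by fastforce
  then show ?thesis using nf_exists_aux[OF GB, of "(degree p + 1, 0)"] by blast
qed

lemma NF_props:
  fixes G F :: "'a::field bipoly list"
  assumes GB: "reduced_lex_GB G (ideal_gen F)"
  shows "p - NF G p \<in> ideal_gen G" and "\<forall>\<mu>\<in>monomials (NF G p). \<not> red G \<mu>"
    and "degree (NF G p) \<le> degree p"
proof -
  obtain r where r: "p - r \<in> ideal_gen G" "\<forall>\<mu>\<in>monomials r. \<not> red G \<mu>" "degree r \<le> degree p"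
    using nf_exists[OF GB] by blast
  have sub: "ideal_gen G \<subseteq> ideal_gen F"
    using GB unfolding reduced_lex_GB_def by (intro ideal_gen_mono) auto
  have "NF G p = r" unfolding NF_def
  proof (rule the_equality)
    show "p - r \<in> ideal_gen G \<and> (\<forall>m\<in>monomials r. \<forall>g\<in>set G. \<not> mon_dvd (lm g) m)"
      using r unfolding red_def by auto
  next
    fix r' assume r': "p - r' \<in> ideal_gen G \<and> (\<forall>m\<in>monomials r'. \<forall>g\<in>set G. \<not> mon_dvd (lm g) m)"
    have "r - r' = (p - r') - (p - r)" by simp
    then have "r - r' \<in> ideal_gen F" using r(1) r' sub ideal_gen_diff by fastforce
    moreover have "\<forall>\<mu>\<in>monomials (r - r'). \<not> red G \<mu>"
      using monomials_diff[of r r'] r(2) r' unfolding red_def by blast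
    ultimately have "r - r' = 0" by (rule reduced_zero[OF GB])
    then show "r' = r" by simp
  qed
  then show "p - NF G p \<in> ideal_gen G" "\<forall>\<mu>\<in>monomials (NF G p). \<not> red G \<mu>"
    "degree (NF G p) \<le> degree p" using r by auto
qed


lemma lin_dep:
  fixes c :: "nat \<Rightarrow> 'b \<Rightarrow> 'a::field"
  assumes fin: "finite B"
  shows "\<exists>lam. (\<exists>k<card B + 2. lam k \<noteq> 0) \<and> (\<forall>b\<in>B. (\<Sum>k<card B + 2. lam k * c k b) = 0)"
proof -
  obtain bs where bs: "set bs = B" "distinct bs" using finite_distinct_list[OF fin] by blast
  define m where "m = card B"
  have mlen: "length bs = m" unfolding m_def using bs distinct_card by fastforce
  define N where "N = m + 2"
  define A :: "'a mat" where "A = mat N N (\<lambda>(r, k). if r < m then c k (bs ! r) else 0)"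
  have A: "A \<in> carrier_mat N N" unfolding A_def by simp
  have "row A m = row A (m + 1)"
    by (rule eq_vecI) (auto simp: A_def N_def)
  then have "det A = 0" by (intro det_identical_rows[OF A, of m "m+1"]) (auto simp: N_def)
  then obtain v where v: "v \<in> carrier_vec N" "v \<noteq> 0\<^sub>v N" "A *\<^sub>v v = 0\<^sub>v N"
    using det_0_iff_vec_prod_zero_field[OF A] by blast
  have nz: "\<exists>k<N. v $ k \<noteq> 0"
  proof (rule ccontr)
    assume "\<not> ?thesis"
    then have "v = 0\<^sub>v N" using v(1) by (intro eq_vecI) auto
    with v(2) show False by simp
  qed
  show ?thesis
  proof (intro exI[of _ "\<lambda>k. v $ k"] conjI ballI)
    show "\<exists>k<card B + 2. v $ k \<noteq> 0" using nz unfolding N_def m_def .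
  next
    fix b assume "b \<in> B"
    then obtain r where r: "r < m" "b = bs ! r" using bs(1) mlen by (auto simp: in_set_conv_nth)
    have "(A *\<^sub>v v) $ r = 0" using v(3) r by (simp add: N_def)
    moreover have "(A *\<^sub>v v) $ r = (\<Sum>k<N. v $ k * c k b)"
      using r v(1) A by (auto simp: A_def N_def scalar_prod_def lessThan_atLeast0 intro!: sum.cong)
    ultimately show "(\<Sum>k<card B + 2. v $ k * c k b) = 0" by (simp add: N_def m_def)
  qed
qed


lemma const_sum: "(\<Sum>k\<in>A. [:[:f k:]:]) = [:[:\<Sum>k\<in>A. f k:]:]"
  by (induction A rule: infinite_finite_induct) auto

lemma const_mult: "[:[:a:]:] * [:[:b:]:] = [:[:a * b:]:]"
  by simp

lemma zd_rel:
  fixes F :: "'a::field bipoly list" and q :: "nat \<Rightarrow> 'a bipoly"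
  assumes zd: "zero_dim (ideal_gen F)"
  shows "\<exists>N lam. (\<exists>k<N. lam k \<noteq> 0) \<and> (\<Sum>k<N. [:[:lam k:]:] * q k) \<in> ideal_gen F"
proof -
  let ?I = "ideal_gen F"
  obtain B where fin: "finite B" and sp: "\<forall>p. \<exists>c. p - (\<Sum>b\<in>B. [:[:c b:]:] * b) \<in> ?I"
    using zd unfolding zero_dim_def by blast
  define C where "C k = (SOME c. q k - (\<Sum>b\<in>B. [:[:c b:]:] * b) \<in> ?I)" for k
  have C: "q k - (\<Sum>b\<in>B. [:[:C k b:]:] * b) \<in> ?I" for k
  proof -
    from sp have "\<exists>c. q k - (\<Sum>b\<in>B. [:[:c b:]:] * b) \<in> ?I" by blast
    then show ?thesis unfolding C_def by (rule someI_ex)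
  qed
  obtain lam where lam: "\<exists>k<card B + 2. lam k \<noteq> 0" "\<forall>b\<in>B. (\<Sum>k<card B + 2. lam k * C k b) = 0"
    using lin_dep[OF fin, of C] by blast
  let ?N = "card B + 2"
  have e: "(\<Sum>k<?N. [:[:lam k:]:] * q k) =
     (\<Sum>k<?N. [:[:lam k:]:] * (q k - (\<Sum>b\<in>B. [:[:C k b:]:] * b))) +
     (\<Sum>k<?N. [:[:lam k:]:] * (\<Sum>b\<in>B. [:[:C k b:]:] * b))"
    by (simp add: algebra_simps sum.distrib[symmetric])
  have "(\<Sum>k<?N. [:[:lam k:]:] * (\<Sum>b\<in>B. [:[:C k b:]:] * b)) =
        (\<Sum>b\<in>B. (\<Sum>k<?N. [:[:lam k:]:] * [:[:C k b:]:]) * b)"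
    unfolding sum_distrib_left sum_distrib_right mult.assoc by (rule sum.swap)
  also have "\<dots> = (\<Sum>b\<in>B. [:[:\<Sum>k<?N. lam k * C k b:]:] * b)"
    by (simp only: const_mult const_sum)
  also have "\<dots> = 0" using lam(2) by simp
  finally have z: "(\<Sum>k<?N. [:[:lam k:]:] * (\<Sum>b\<in>B. [:[:C k b:]:] * b)) = 0" .
  have "(\<Sum>k<?N. [:[:lam k:]:] * (q k - (\<Sum>b\<in>B. [:[:C k b:]:] * b))) \<in> ?I"
    by (rule ideal_gen_sum, rule ideal_gen_mult, rule C)
  then have "(\<Sum>k<?N. [:[:lam k:]:] * q k) \<in> ?I"
    unfolding e z by simp
  then show ?thesis using lam(1) by blast
qed

lemma zd_univariate:
  fixes F :: "'a::field bipoly list"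
  assumes zd: "zero_dim (ideal_gen F)"
  shows "\<exists>f\<in>ideal_gen F. f \<noteq> 0 \<and> degree f = 0"
proof -
  obtain N lam where lam: "\<exists>k<N. lam k \<noteq> 0" "(\<Sum>k<N. [:[:lam k:]:] * [:monom 1 k:]) \<in> ideal_gen F"
    using zd_rel[OF zd, of "\<lambda>k. [:monom 1 k:]"] by blast
  define P where "P = (\<Sum>k<N. monom (lam k) k)"
  have "(\<Sum>k<N. [:[:lam k:]:] * [:monom 1 k:]) = (\<Sum>k<N. [:monom (lam k) k:])"
    by (rule sum.cong) (auto simp: smult_monom)
  also have "\<dots> = [:P:]" unfolding P_def by (induction N) auto
  finally have PI: "[:P:] \<in> ideal_gen F" using lam(2) by simp
  obtain k where k: "k < N" "lam k \<noteq> 0" using lam(1) by blast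
  have "coeff P k = lam k" unfolding P_def coeff_sum using k by (simp add: coeff_monom)
  then have "P \<noteq> 0" using k by auto
  then show ?thesis using PI by (intro bexI[of _ "[:P:]"]) auto
qed

lemma zd_ymonic:
  fixes F :: "'a::field bipoly list"
  assumes zd: "zero_dim (ideal_gen F)"
  shows "\<exists>f\<in>ideal_gen F. f \<noteq> 0 \<and> degree (lead_coeff f) = 0"
proof -
  obtain N lam where lam: "\<exists>k<N. lam k \<noteq> 0" "(\<Sum>k<N. [:[:lam k:]:] * monom 1 k) \<in> ideal_gen F"
    using zd_rel[OF zd, of "\<lambda>k. monom 1 k"] by blast
  define f where "f = (\<Sum>k<N. [:[:lam k:]:] * monom 1 k)"
  have cf: "coeff f j = [:(if j < N then lam j else 0):]" for j
  proof -
    have "coeff f j = (\<Sum>k<N. if k = j then [:lam k:] else 0)"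
      unfolding f_def coeff_sum by (rule sum.cong) (auto simp: coeff_monom smult_monom)
    also have "\<dots> = [:(if j < N then lam j else 0):]" by (simp add: sum.delta')
    finally show ?thesis .
  qed
  obtain k where k: "k < N" "lam k \<noteq> 0" using lam(1) by blast
  then have "coeff f k \<noteq> 0" using cf by simp
  then have "f \<noteq> 0" by auto
  moreover have "degree (lead_coeff f) = 0" using cf by simp
  ultimately show ?thesis using lam(2) f_def by blast
qed


locale gbz =
  fixes F G :: "'a::field bipoly list"
  assumes GB: "reduced_lex_GB G (ideal_gen F)" and zd: "zero_dim (ideal_gen F)"
begin

abbreviation "nn k \<equiv> degree (G ! k)"
abbreviation "bb k \<equiv> degree (lead_coeff (G ! k))"

lemma G_basic:
  assumes "k < length G"
  shows "G ! k \<noteq> 0" "G ! k \<in> ideal_gen F" "lcoeff (G ! k) = 1" "G \<noteq> []"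
  using GB assms unfolding reduced_lex_GB_def by (auto dest: nth_mem)

lemma G_ne: "G \<noteq> []" using GB unfolding reduced_lex_GB_def by auto

lemma gb_order:
  assumes ij: "i < j" "j < length G"
  shows "nn j < nn i \<and> bb i < bb j"
proof -
  have lt: "lex_less (lm (G ! j)) (lm (G ! i))" using GB ij unfolding reduced_lex_GB_def by auto
  have ne: "G ! j \<noteq> G ! i" using GB ij unfolding reduced_lex_GB_def by (simp add: nth_eq_iff_index_eq)
  have red: "\<not> mon_dvd (lm (G ! j)) (lm (G ! i))"
  proof
    assume d: "mon_dvd (lm (G ! j)) (lm (G ! i))"
    have "lm (G ! i) \<in> monomials (G ! i)" using G_basic(1) ij by (intro lm_in_monomials) auto
    with d ne GB ij show False unfolding reduced_lex_GB_def
      by (metis less_trans nth_mem)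
  qed
  from lt red show ?thesis unfolding lex_less_def mon_dvd_def lm_def by auto
qed

lemma nn_mono: "i \<le> j \<Longrightarrow> j < length G \<Longrightarrow> nn j \<le> nn i"
  using gb_order[of i j] by (cases "i = j") auto

lemma bb_mono: "i \<le> j \<Longrightarrow> j < length G \<Longrightarrow> bb i \<le> bb j"
  using gb_order[of i j] by (cases "i = j") auto

lemma In_lm:
  assumes "f \<in> ideal_gen F" "f \<noteq> 0"
  shows "\<exists>k<length G. nn k \<le> degree f \<and> bb k \<le> degree (lead_coeff f)"
proof -
  obtain g where "g \<in> set G" "mon_dvd (lm g) (lm f)" using GB assms unfolding reduced_lex_GB_def by blast
  then show ?thesis unfolding mon_dvd_def lm_def by (auto simp: in_set_conv_nth)
qed

lemma nS0: "nS G = 0"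
proof -
  obtain f where f: "f \<in> ideal_gen F" "f \<noteq> 0" "degree f = 0" using zd_univariate[OF zd] by blast
  obtain k where k: "k < length G" "nn k = 0" using In_lm[OF f(1,2)] f(3) by auto
  have "nn (length G - 1) \<le> nn k" using k by (intro nn_mono) auto
  then show ?thesis unfolding nS_def using k G_ne by (simp add: last_conv_nth)
qed

lemma bb0: "bb 0 = 0"
proof -
  obtain f where f: "f \<in> ideal_gen F" "f \<noteq> 0" "degree (lead_coeff f) = 0" using zd_ymonic[OF zd] by blast
  obtain k where k: "k < length G" "bb k = 0" using In_lm[OF f(1,2)] f(3) by auto
  have "bb 0 \<le> bb k" using k by (intro bb_mono) auto
  then show ?thesis using k by simp
qed

lemma lc0: "lead_coeff (G ! 0) = 1"
proof -
  have "lcoeff (G ! 0) = 1" using G_basic(3) G_ne by auto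
  then show ?thesis using bb0 unfolding lcoeff_def
    by (metis degree_0_id one_pCons)
qed

lemma lc_ne1: "0 < k \<Longrightarrow> k < length G \<Longrightarrow> lead_coeff (G ! k) \<noteq> 1"
  using gb_order[of 0 k] bb0 by auto

definition kap :: "nat \<Rightarrow> nat" where "kap i = (LEAST k. k < length G \<and> nn k \<le> i)"

lemma kap_props: "kap i < length G" "nn (kap i) \<le> i" "\<And>k. k < length G \<Longrightarrow> nn k \<le> i \<Longrightarrow> kap i \<le> k"
proof -
  have ex: "length G - 1 < length G \<and> nn (length G - 1) \<le> i"
    using nS0 G_ne unfolding nS_def by (simp add: last_conv_nth)
  have ex': "\<exists>k. k < length G \<and> nn k \<le> i" using ex by blast
  show "kap i < length G" "nn (kap i) \<le> i" using LeastI_ex[OF ex'] unfolding kap_def by auto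
  show "\<And>k. k < length G \<Longrightarrow> nn k \<le> i \<Longrightarrow> kap i \<le> k" unfolding kap_def by (rule Least_le) auto
qed

lemma In_bb:
  assumes "f \<in> ideal_gen F" "f \<noteq> 0"
  shows "bb (kap (degree f)) \<le> degree (lead_coeff f)"
proof -
  obtain k where k: "k < length G" "nn k \<le> degree f" "bb k \<le> degree (lead_coeff f)"
    using In_lm[OF assms] by blast
  have "kap (degree f) \<le> k" using kap_props(3)[OF k(1,2)] .
  then have "bb (kap (degree f)) \<le> bb k" using k(1) by (intro bb_mono)
  then show ?thesis using k(3) by simp
qed

lemma notred_bound: "\<not> red G (m, e) \<Longrightarrow> e < bb (kap m)"
  using kap_props(1,2)[of m] unfolding red_def mon_dvd_def lm_def
  by (metis fst_conv snd_conv not_le nth_mem)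

lemma n0_eq: "n0 G = nn 0" unfolding n0_def ..

end

lemma coeff_ymul: fixes p :: "'a::comm_semiring_1 poly" shows "coeff (monom 1 1 * p) k = (if k = 0 then 0 else coeff p (k - 1))"
  by (auto simp add: coeff_monom_mult)

lemma coeff_ytrunc: "coeff (ytrunc i h) l = (if l < i then coeff h l else 0)"
  unfolding ytrunc_def coeff_sum by (simp add: coeff_monom sum.delta')

context gbz begin

definition Pinv :: "nat \<Rightarrow> 'a bipoly \<Rightarrow> bool" where
  "Pinv i A \<longleftrightarrow> A \<in> ideal_gen F \<and> degree A = i \<and> lead_coeff A = lead_coeff (G ! kap i) \<and>
      (\<forall>m e. (m, e) \<in> monomials A \<longrightarrow> m < i \<longrightarrow> \<not> red G (m, e))"

lemma some_k:
  assumes k0: "k0 < length G" "nn k0 = i"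
  shows "(SOME k. k < length G \<and> degree (G ! k) = i) = k0"
proof (rule some_equality)
  show "k0 < length G \<and> nn k0 = i" using k0 by simp
next
  fix k assume k: "k < length G \<and> nn k = i"
  show "k = k0"
  proof (rule ccontr)
    assume "k \<noteq> k0"
    then consider "k < k0" | "k0 < k" by linarith
    then show False using gb_order k k0 by (cases) (metis less_irrefl)+
  qed
qed

lemma Pinv_G:
  assumes k0: "k0 < length G" "nn k0 = i"
  shows "Pinv i (G ! k0)"
proof -
  have kap: "kap i = k0"
  proof -
    have a: "kap i \<le> k0" using kap_props(3)[of k0 i] k0 by simp
    have "\<not> kap i < k0" using gb_order[of "kap i" k0] kap_props(2)[of i] k0 by auto
    then show ?thesis using a by simp
  qed
  have red: "\<not> red G (m, e)" if me: "(m, e) \<in> monomials (G ! k0)" "m < i" for m e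
  proof
    assume "red G (m, e)"
    then obtain k' where k': "k' < length G" "mon_dvd (lm (G ! k')) (m, e)"
      unfolding red_def by (auto simp: in_set_conv_nth)
    show False
    proof (cases "k' = k0")
      case True then show False using k' me k0 unfolding mon_dvd_def lm_def by auto
    next
      case False
      then have "G ! k' \<noteq> G ! k0" using GB k0 k' unfolding reduced_lex_GB_def
        by (simp add: nth_eq_iff_index_eq)
      then show False using GB k0 k' me unfolding reduced_lex_GB_def by (metis nth_mem)
    qed
  qed
  show ?thesis unfolding Pinv_def kap using k0 G_basic[OF k0(1)] red by auto
qed

lemma detach_inv: "i \<le> n0 G \<Longrightarrow> Pinv i (detach G i)"
proof (induction i)
  case 0
  obtain k0 where k0: "k0 < length G" "nn k0 = 0"
  proof -
    have "length G - 1 < length G" "nn (length G - 1) = 0"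
      using nS0 G_ne unfolding nS_def by (auto simp: last_conv_nth)
    then show ?thesis using that by blast
  qed
  have "detach G 0 = G ! k0" using k0 nS0 some_k[OF k0] by auto
  then show ?case using Pinv_G[OF k0] by simp
next
  case (Suc j)
  show ?case
  proof (cases "\<exists>k<length G. nn k = Suc j")
    case True
    then obtain k0 where k0: "k0 < length G" "nn k0 = Suc j" by blast
    have "detach G (Suc j) = G ! k0" using k0 nS0 some_k[OF k0] by auto
    then show ?thesis using Pinv_G[OF k0] by simp
  next
    case False
    have IH: "Pinv j (detach G j)" using Suc by simp
    define A where "A = detach G j"
    define h where "h = monom 1 1 * A"
    define t where "t = ytrunc (Suc j) h"
    define D where "D = detach G (Suc j)"
    have det: "D = (h - t) + NF G t"
      using False nS0 unfolding D_def A_def h_def t_def by (auto simp add: Let_def)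
    have A: "A \<in> ideal_gen F" "degree A = j" "lead_coeff A = lead_coeff (G ! kap j)"
      using IH unfolding Pinv_def A_def by auto
    have lcA: "lead_coeff A \<noteq> 0" using A(3) G_basic(1) kap_props(1) by auto
    have kapS: "kap (Suc j) = kap j"
    proof -
      have "\<And>k. k < length G \<Longrightarrow> nn k \<le> Suc j \<longleftrightarrow> nn k \<le> j" using False by (auto simp: le_Suc_eq)
      then have "(\<lambda>k. k < length G \<and> nn k \<le> Suc j) = (\<lambda>k. k < length G \<and> nn k \<le> j)"
        by blast
      then show ?thesis unfolding kap_def by simp
    qed
    have ch: "coeff h l = (if l = 0 then 0 else coeff A (l - 1))" for l unfolding h_def coeff_ymul ..
    have ct: "coeff t l = (if l < Suc j then coeff h l else 0)" for l unfolding t_def coeff_ytrunc ..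
    have dt: "degree t \<le> j" by (rule degree_le) (auto simp: ct)
    have dNF: "degree (NF G t) \<le> j" using NF_props(3)[OF GB, of t] dt by simp
    have cNF: "coeff (NF G t) l = 0" if "j < l" for l using dNF that by (simp add: coeff_eq_0)
    have cD: "coeff D l = (if l \<le> j then coeff (NF G t) l else coeff h l)" for l
      unfolding det by (auto simp: ct cNF)
    have hS: "coeff h (Suc j) = lead_coeff A" using A(2) by (simp add: ch)
    have deg: "degree D = Suc j"
    proof (rule antisym)
      show "degree D \<le> Suc j"
        by (rule degree_le) (auto simp: cD ch coeff_eq_0 A(2))
      show "Suc j \<le> degree D"
        by (rule le_degree) (use lcA in \<open>simp add: cD hS\<close>)
    qed
    have "lead_coeff D = coeff D (Suc j)" using deg by simp
    also have "\<dots> = lead_coeff A" by (simp add: cD hS)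
    finally have lc: "lead_coeff D = lead_coeff (G ! kap (Suc j))" using A(3) kapS by simp
    have hI: "h \<in> ideal_gen F" unfolding h_def using A(1) by (rule ideal_gen_mult)
    have sub: "ideal_gen G \<subseteq> ideal_gen F"
      using GB unfolding reduced_lex_GB_def by (intro ideal_gen_mono) auto
    have tI: "t - NF G t \<in> ideal_gen F" using NF_props(1)[OF GB, of t] sub by auto
    have "D = h - (t - NF G t)" unfolding det by simp
    then have inI: "D \<in> ideal_gen F" using ideal_gen_diff[OF hI tI] by simp
    have mon: "\<not> red G (m, e)" if "(m, e) \<in> monomials D" "m < Suc j" for m e
    proof -
      have "(m, e) \<in> monomials (NF G t)" using that unfolding monomials_def by (auto simp: cD)
      then show ?thesis using NF_props(2)[OF GB, of t] by blast
    qed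
    show ?thesis unfolding Pinv_def D_def[symmetric] using inI deg lc mon by blast
  qed
qed

end

lemma coeff_pi_inv: "coeff (pi_inv n v) m = (if m < n then v $ (n - 1 - m) else 0)"
proof -
  have "coeff (pi_inv n v) m = (\<Sum>r<n. if r = n - 1 - m \<and> m < n then v $ r else 0)"
    unfolding pi_inv_def coeff_sum by (rule sum.cong) (auto simp: coeff_monom)
  also have "\<dots> = (if m < n then v $ (n - 1 - m) else 0)"
    by (cases "m < n") (auto simp: sum.delta')
  finally show ?thesis .
qed

lemma pi_vec_index: "r < n \<Longrightarrow> pi_vec n f $ r = coeff f (n - 1 - r)"
  unfolding pi_vec_def by simp

lemma pi_vec_dim[simp]: "pi_vec n f \<in> carrier_vec n" "dim_vec (pi_vec n f) = n"
  unfolding pi_vec_def by auto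

lemma pi_vec_inv: "v \<in> carrier_vec n \<Longrightarrow> pi_vec n (pi_inv n v) = v"
  by (intro eq_vecI) (auto simp: pi_vec_index coeff_pi_inv)

lemma pi_inv_vec: "degree f < n \<Longrightarrow> pi_inv n (pi_vec n f) = f"
  by (intro poly_eqI) (auto simp: pi_vec_index coeff_pi_inv coeff_eq_0)

lemma sum_split_nat: fixes t D :: nat shows "(\<Sum>c<t*D. g c) = (\<Sum>q<t. \<Sum>l<D. g (q*D + l))"
proof -
  have "(\<Sum>c<t*D. g c) = (\<Sum>q<t. sum g {q*D..<q*D+D})" using sum.nat_group[of g D t] by simp
  also have "\<dots> = (\<Sum>q<t. \<Sum>l<D. g (q*D+l))"
  proof (rule sum.cong[OF refl])
    fix q show "sum g {q*D..<q*D+D} = (\<Sum>l<D. g (q*D+l))"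
      by (rule sum.reindex_bij_witness[of _ "\<lambda>l. q*D+l" "\<lambda>c. c - q*D"]) auto
  qed
  finally show ?thesis .
qed

lemma S_carrier: "S_mat F dy D \<in> carrier_mat (dy + D) (length F * D)"
  unfolding S_mat_def by simp

definition Wq :: "nat \<Rightarrow> 'a::comm_ring_1 poly vec \<Rightarrow> nat \<Rightarrow> 'a bipoly" where
  "Wq D u q = (\<Sum>l<D. monom (u $ (q*D + l)) (D - 1 - l))"

lemma L_S:
  fixes F :: "'a::comm_ring_1 bipoly list"
  assumes deg: "\<forall>f\<in>set F. degree f \<le> dy" and u: "u \<in> carrier_vec (length F * D)"
  shows "pi_inv (dy + D) (S_mat F dy D *\<^sub>v u) = (\<Sum>q<length F. Wq D u q * F ! q)"
proof (rule poly_eqI)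
  fix m
  let ?n = "dy + D" and ?t = "length F"
  have rhs: "coeff (\<Sum>q<?t. Wq D u q * F ! q) m =
     (\<Sum>q<?t. \<Sum>l<D. u $ (q*D + l) * (if D - 1 - l \<le> m then coeff (F ! q) (m - (D - 1 - l)) else 0))"
    unfolding coeff_sum Wq_def sum_distrib_right
    by (intro sum.cong refl) (simp add: coeff_monom_mult)
  show "coeff (pi_inv ?n (S_mat F dy D *\<^sub>v u)) m = coeff (\<Sum>q<?t. Wq D u q * F ! q) m"
  proof (cases "m < ?n")
    case True
    have "coeff (pi_inv ?n (S_mat F dy D *\<^sub>v u)) m = (S_mat F dy D *\<^sub>v u) $ (?n - 1 - m)"
      using True by (simp add: coeff_pi_inv)
    also have "\<dots> = (\<Sum>c<?t*D. coeff (monom 1 (D - 1 - c mod D) * F ! (c div D)) m * u $ c)"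
      using True u unfolding S_mat_def
      by (auto simp: scalar_prod_def lessThan_atLeast0 intro!: sum.cong)
    also have "\<dots> = (\<Sum>q<?t. \<Sum>l<D. coeff (monom 1 (D - 1 - l) * F ! q) m * u $ (q*D + l))"
      unfolding sum_split_nat
      by (intro sum.cong refl) (simp add: add.commute)
    also have "\<dots> = coeff (\<Sum>q<?t. Wq D u q * F ! q) m"
      unfolding rhs by (intro sum.cong refl) (simp add: coeff_monom_mult)
    finally show ?thesis .
  next
    case False
    have "coeff (\<Sum>q<?t. Wq D u q * F ! q) m = 0"
      unfolding rhs
    proof (intro sum.neutral ballI)
      fix q l assume q: "q \<in> {..<?t}" and l: "l \<in> {..<D}"
      have "degree (F ! q) \<le> dy" using deg q by auto
      moreover have "dy < m - (D - 1 - l)" using False l by auto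
      ultimately have "coeff (F ! q) (m - (D - 1 - l)) = 0" by (simp add: coeff_eq_0)
      then show "u $ (q * D + l) * (if D - 1 - l \<le> m then coeff (F ! q) (m - (D - 1 - l)) else 0) = 0"
        by simp
    qed
    then show ?thesis using False by (simp add: coeff_pi_inv)
  qed
qed


lemma small_diff:
  fixes a b :: "'a::field poly"
  assumes "a = 0 \<or> degree a < d" "b = 0 \<or> degree b < d" "a - b \<noteq> 0"
  shows "degree (a - b) < d"
proof (cases "a = 0")
  case True
  then show ?thesis using assms by auto
next
  case False
  show ?thesis
  proof (cases "b = 0")
    case True then show ?thesis using assms False by auto
  next
    case b: False
    have "degree (a - b) \<le> max (degree a) (degree b)" by (rule degree_diff_le_max)
    then show ?thesis using assms False b by auto
  qed
qed

locale setting = gbz F G for F G :: "'a::field bipoly list" +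
  fixes dy D :: nat and H :: "'a poly mat"
  assumes lenF: "length F \<ge> 2" and degF: "\<forall>f\<in>set F. degree f \<le> dy"
    and DD: "D \<ge> Delta F G" and hnf: "hermite_nf (S_mat F dy D) H"
begin

abbreviation "nr \<equiv> dy + D"
abbreviation "N \<equiv> length F * D"
abbreviation "S \<equiv> S_mat F dy D"

definition PD :: "nat \<Rightarrow> bool" where
  "PD \<Delta> \<longleftrightarrow> (\<forall>i\<in>{nS G..n0 G}. \<exists>w.
        (\<forall>j<length F. degree (w j) < \<Delta>) \<and> detach G i = (\<Sum>j<length F. w j * F ! j))"

lemma PD_ex: "\<exists>\<Delta>. PD \<Delta>"
proof -
  have "\<exists>w. detach G i = (\<Sum>j<length F. w j * F ! j)" if "i \<le> n0 G" for i
    using detach_inv[OF that] unfolding Pinv_def ideal_gen_def by auto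
  then obtain W where W: "\<And>i. i \<le> n0 G \<Longrightarrow> detach G i = (\<Sum>j<length F. W i j * F ! j)" by metis
  define M where "M = Max ((\<lambda>(i, j). degree (W i j)) ` ({..n0 G} \<times> {..<length F}))"
  have "degree (W i j) \<le> M" if "i \<le> n0 G" "j < length F" for i j
    unfolding M_def using that by (intro Max_ge) auto
  then have "PD (M + 1)" unfolding PD_def
  proof (intro ballI)
    fix i assume "i \<in> {nS G..n0 G}"
    then have i: "i \<le> n0 G" by simp
    show "\<exists>w. (\<forall>j<length F. degree (w j) < M + 1) \<and> detach G i = (\<Sum>j<length F. w j * F ! j)"
      using W[OF i] \<open>\<And>i j. i \<le> n0 G \<Longrightarrow> j < length F \<Longrightarrow> degree (W i j) \<le> M\<close>[OF i]
      by (intro exI[of _ "W i"]) (simp add: le_imp_less_Suc)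
  qed
  then show ?thesis by blast
qed

lemma PD_D: "PD D"
proof -
  have eq: "Delta F G = (LEAST \<Delta>. PD \<Delta>)" unfolding Delta_def PD_def by (rule refl)
  have "PD (LEAST \<Delta>. PD \<Delta>)" by (rule LeastI_ex[OF PD_ex])
  then have "PD (Delta F G)" unfolding eq .
  then show ?thesis unfolding PD_def
  proof (intro ballI)
    fix i assume a: "\<forall>i\<in>{nS G..n0 G}. \<exists>w. (\<forall>j<length F. degree (w j) < Delta F G) \<and>
           detach G i = (\<Sum>j<length F. w j * F ! j)" and i: "i \<in> {nS G..n0 G}"
    from a i obtain w where w: "\<forall>j<length F. degree (w j) < Delta F G"
      "detach G i = (\<Sum>j<length F. w j * F ! j)" by blast
    show "\<exists>w. (\<forall>j<length F. degree (w j) < D) \<and> detach G i = (\<Sum>j<length F. w j * F ! j)"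
      using w DD by (intro exI[of _ w]) auto
  qed
qed

lemma D_pos: "0 < D"
proof -
  have "0 \<in> {nS G..n0 G}" by (simp add: nS0)
  from bspec[OF PD_D[unfolded PD_def] this] obtain w :: "nat \<Rightarrow> 'a bipoly" where w: "\<forall>j<length F. degree (w j) < D"
    by auto
  have "0 < length F" using lenF by linarith
  then have "degree (w 0) < D" using w by blast
  then show ?thesis by simp
qed


lemma UV: "\<exists>U V. U \<in> carrier_mat N N \<and> V \<in> carrier_mat N N \<and> U * V = 1\<^sub>m N \<and> V * U = 1\<^sub>m N \<and> H = S * U"
  using hnf S_carrier[of F dy D] unfolding hermite_nf_def by simp

lemma H_carrier: "H \<in> carrier_mat nr N"
  using UV S_carrier[of F dy D] by auto

lemma hshape: "hnf_shape H" using hnf unfolding hermite_nf_def by simp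

abbreviation "K \<equiv> nz_cols H"

lemma K_props: "K \<le> N" "\<And>j. j < N \<Longrightarrow> col H j = 0\<^sub>v nr \<longleftrightarrow> K \<le> j"
  "\<And>j1 j2. j1 < j2 \<Longrightarrow> j2 < K \<Longrightarrow> piv H j1 < piv H j2"
  "\<And>j. j < K \<Longrightarrow> lead_coeff (H $$ (piv H j, j)) = 1"
  "\<And>j j'. j < K \<Longrightarrow> j' < j \<Longrightarrow> H $$ (piv H j, j') = 0 \<or> degree (H $$ (piv H j, j')) < degree (H $$ (piv H j, j))"
proof -
  obtain K0 where K0: "K0 \<le> N" "\<forall>j<N. col H j = 0\<^sub>v nr \<longleftrightarrow> K0 \<le> j"
    "\<forall>j1 j2. j1 < j2 \<longrightarrow> j2 < K0 \<longrightarrow> piv H j1 < piv H j2"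
    "\<forall>j<K0. lead_coeff (H $$ (piv H j, j)) = 1 \<and>
         (\<forall>j'<j. H $$ (piv H j, j') = 0 \<or> degree (H $$ (piv H j, j')) < degree (H $$ (piv H j, j)))"
    using hshape H_carrier unfolding hnf_shape_def by auto
  have "{j. j < dim_col H \<and> col H j \<noteq> 0\<^sub>v (dim_row H)} = {..<K0}"
    using K0(1,2) H_carrier by auto
  then have KK: "K = K0" unfolding nz_cols_def by simp
  show "K \<le> N" "\<And>j. j < N \<Longrightarrow> col H j = 0\<^sub>v nr \<longleftrightarrow> K \<le> j"
    "\<And>j1 j2. j1 < j2 \<Longrightarrow> j2 < K \<Longrightarrow> piv H j1 < piv H j2"
    "\<And>j. j < K \<Longrightarrow> lead_coeff (H $$ (piv H j, j)) = 1"
    "\<And>j j'. j < K \<Longrightarrow> j' < j \<Longrightarrow> H $$ (piv H j, j') = 0 \<or> degree (H $$ (piv H j, j')) < degree (H $$ (piv H j, j))"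
    using K0 unfolding KK by auto
qed

lemma H_zero_col: "j < N \<Longrightarrow> K \<le> j \<Longrightarrow> r < nr \<Longrightarrow> H $$ (r, j) = 0"
proof -
  assume j: "j < N" "K \<le> j" "r < nr"
  then have "col H j = 0\<^sub>v nr" using K_props(2) by simp
  then have "col H j $ r = 0" using j by simp
  then show ?thesis using j H_carrier by simp
qed

lemma piv_props:
  assumes j: "j < K"
  shows "piv H j < nr" "H $$ (piv H j, j) \<noteq> 0" "\<And>r. r < piv H j \<Longrightarrow> H $$ (r, j) = 0"
proof -
  have jN: "j < N" using j K_props(1) by simp
  have "col H j \<noteq> 0\<^sub>v nr" using K_props(2)[OF jN] j by simp
  then obtain r where r: "r < nr" "col H j $ r \<noteq> 0"
    using H_carrier by (metis carrier_matD(1) dim_col eq_vecI index_zero_vec(1) index_zero_vec(2))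
  then have ex: "\<exists>r. r < dim_row H \<and> H $$ (r, j) \<noteq> 0" using H_carrier jN by auto
  show "piv H j < nr" "H $$ (piv H j, j) \<noteq> 0"
    using LeastI_ex[OF ex] H_carrier unfolding piv_def by auto
  show "\<And>r. r < piv H j \<Longrightarrow> H $$ (r, j) = 0"
  proof (rule ccontr)
    fix r assume r: "r < piv H j" "H $$ (r, j) \<noteq> 0"
    have "r < dim_row H" using r(1) \<open>piv H j < nr\<close> H_carrier by auto
    then have "piv H j \<le> r" unfolding piv_def using r(2) by (intro Least_le) auto
    then show False using r(1) by simp
  qed
qed

lemma mult_index: "v \<in> carrier_vec N \<Longrightarrow> r < nr \<Longrightarrow> (H *\<^sub>v v) $ r = (\<Sum>j<N. H $$ (r, j) * v $ j)"
  using H_carrier by (auto simp: scalar_prod_def lessThan_atLeast0 intro!: sum.cong)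

lemma echelon:
  assumes v: "v \<in> carrier_vec N" and j0: "j0 < K" and z: "\<forall>j<j0. v $ j = 0" and r: "r \<le> piv H j0"
  shows "(H *\<^sub>v v) $ r = (if r = piv H j0 then H $$ (piv H j0, j0) * v $ j0 else 0)"
proof -
  have rn: "r < nr" using r piv_props(1)[OF j0] by simp
  have j0N: "j0 < N" using j0 K_props(1) by simp
  have "(H *\<^sub>v v) $ r = (\<Sum>j<N. if j = j0 then H $$ (r, j0) * v $ j0 else 0)"
    unfolding mult_index[OF v rn]
  proof (rule sum.cong[OF refl])
    fix j assume jN: "j \<in> {..<N}"
    show "H $$ (r, j) * v $ j = (if j = j0 then H $$ (r, j0) * v $ j0 else 0)"
    proof (cases "j < j0")
      case True then show ?thesis using z by simp
    next
      case False
      show ?thesis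
      proof (cases "j = j0")
        case True then show ?thesis by simp
      next
        case ne: False
        show ?thesis
        proof (cases "j < K")
          case True
          have "piv H j0 < piv H j" using K_props(3)[of j0 j] True False ne by simp
          then have "H $$ (r, j) = 0" using piv_props(3)[OF True] r by simp
          then show ?thesis using ne by simp
        next
          case False
          then have "H $$ (r, j) = 0" using H_zero_col jN rn by simp
          then show ?thesis using ne by simp
        qed
      qed
    qed
  qed
  also have "\<dots> = H $$ (r, j0) * v $ j0" using j0N by (simp add: sum.delta')
  finally show ?thesis using piv_props(3)[OF j0, of r] r by auto
qed

lemma echelon_zero:
  assumes v: "v \<in> carrier_vec N" and z: "\<forall>j<K. v $ j = 0"
  shows "H *\<^sub>v v = 0\<^sub>v nr"
proof (rule eq_vecI)
  show "dim_vec (H *\<^sub>v v) = dim_vec (0\<^sub>v nr)" using H_carrier by simp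
  fix r assume "r < dim_vec (0\<^sub>v nr)"
  then have rn: "r < nr" by simp
  have "(\<Sum>j<N. H $$ (r, j) * v $ j) = 0"
  proof (rule sum.neutral, rule ballI)
    fix j assume "j \<in> {..<N}"
    then show "H $$ (r, j) * v $ j = 0" using z H_zero_col[of j r] rn by (cases "j < K") auto
  qed
  then show "(H *\<^sub>v v) $ r = 0\<^sub>v nr $ r" using mult_index[OF v rn] rn by simp
qed

lemma echelon_poly:
  assumes v: "v \<in> carrier_vec N" and j0: "j0 < K" and z: "\<forall>j<j0. v $ j = 0" and nz: "v $ j0 \<noteq> 0"
  shows "degree (pi_inv nr (H *\<^sub>v v)) = nr - 1 - piv H j0"
    "lead_coeff (pi_inv nr (H *\<^sub>v v)) = H $$ (piv H j0, j0) * v $ j0"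
proof -
  let ?P = "pi_inv nr (H *\<^sub>v v)"
  have pn: "piv H j0 < nr" by (rule piv_props(1)[OF j0])
  have c1: "coeff ?P (nr - 1 - piv H j0) = H $$ (piv H j0, j0) * v $ j0"
    using pn echelon[OF v j0 z, of "piv H j0"] by (simp add: coeff_pi_inv)
  have nz2: "H $$ (piv H j0, j0) * v $ j0 \<noteq> 0" using piv_props(2)[OF j0] nz by simp
  have deg: "degree ?P = nr - 1 - piv H j0"
  proof (rule antisym)
    show "degree ?P \<le> nr - 1 - piv H j0"
    proof (rule degree_le, intro allI impI)
      fix m assume m: "nr - 1 - piv H j0 < m"
      show "coeff ?P m = 0"
      proof (cases "m < nr")
        case True
        then have "nr - 1 - m < piv H j0" using m by linarith
        then show ?thesis using True echelon[OF v j0 z, of "nr - 1 - m"] by (simp add: coeff_pi_inv)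
      next
        case False then show ?thesis by (simp add: coeff_pi_inv)
      qed
    qed
    show "nr - 1 - piv H j0 \<le> degree ?P" using c1 nz2 by (intro le_degree) simp
  qed
  show "degree ?P = nr - 1 - piv H j0" by (rule deg)
  show "lead_coeff ?P = H $$ (piv H j0, j0) * v $ j0" using deg c1 by simp
qed


lemma S_HV: "\<exists>V. V \<in> carrier_mat N N \<and> S = H * V \<and> (\<forall>j<N. \<exists>u\<in>carrier_vec N. col H j = S *\<^sub>v u)"
proof -
  obtain U V where UV: "U \<in> carrier_mat N N" "V \<in> carrier_mat N N" "U * V = 1\<^sub>m N" "H = S * U"
    using UV by blast
  have Sc: "S \<in> carrier_mat nr N" by (rule S_carrier)
  have "H * V = S * (U * V)" unfolding UV(4) using Sc UV(1,2) by (rule assoc_mult_mat)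
  also have "\<dots> = S" using Sc UV(3) by simp
  finally have "S = H * V" by simp
  moreover have "\<forall>j<N. \<exists>u\<in>carrier_vec N. col H j = S *\<^sub>v u"
  proof (intro allI impI)
    fix j assume j: "j < N"
    have "col H j = S *\<^sub>v col U j" unfolding UV(4) using Sc UV(1) j by (rule col_mult2)
    moreover have "col U j \<in> carrier_vec N" using UV(1) by (simp add: carrier_vecI)
    ultimately show "\<exists>u\<in>carrier_vec N. col H j = S *\<^sub>v u" by blast
  qed
  ultimately show ?thesis using UV(2) by blast
qed

lemma S_I: "u \<in> carrier_vec N \<Longrightarrow> pi_inv nr (S *\<^sub>v u) \<in> ideal_gen F"
  unfolding L_S[OF degF] ideal_gen_def by (intro CollectI exI) (rule refl)

lemma col_I: "j < N \<Longrightarrow> pi_inv nr (col H j) \<in> ideal_gen F"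
  using S_HV S_I by metis

lemma coeff_hcol: "j < N \<Longrightarrow> coeff (pi_inv nr (col H j)) m = (if m < nr then H $$ (nr - 1 - m, j) else 0)"
  using H_carrier by (simp add: coeff_pi_inv)

lemma hcol:
  assumes j: "j < K"
  shows "degree (pi_inv nr (col H j)) = nr - 1 - piv H j"
    "lead_coeff (pi_inv nr (col H j)) = H $$ (piv H j, j)"
proof -
  have jN: "j < N" using j K_props(1) by simp
  let ?P = "pi_inv nr (col H j)"
  have pn: "piv H j < nr" by (rule piv_props(1)[OF j])
  have c1: "coeff ?P (nr - 1 - piv H j) = H $$ (piv H j, j)"
    using pn by (simp add: coeff_hcol[OF jN])
  have deg: "degree ?P = nr - 1 - piv H j"
  proof (rule antisym)
    show "degree ?P \<le> nr - 1 - piv H j"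
    proof (rule degree_le, intro allI impI)
      fix m assume m: "nr - 1 - piv H j < m"
      show "coeff ?P m = 0"
      proof (cases "m < nr")
        case True
        then have "nr - 1 - m < piv H j" using m by linarith
        then show ?thesis using True piv_props(3)[OF j] by (simp add: coeff_hcol[OF jN])
      next
        case False then show ?thesis by (simp add: coeff_hcol[OF jN])
      qed
    qed
    show "nr - 1 - piv H j \<le> degree ?P" using c1 piv_props(2)[OF j] by (intro le_degree) simp
  qed
  show "degree ?P = nr - 1 - piv H j" by (rule deg)
  show "lead_coeff ?P = H $$ (piv H j, j)" using deg c1 by simp
qed

lemma degree_pi_inv: "0 < n \<Longrightarrow> degree (pi_inv n x) < n"
proof -
  assume n: "0 < n"
  have "degree (pi_inv n x) \<le> n - 1" by (rule degree_le) (auto simp: coeff_pi_inv)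
  then show ?thesis using n by simp
qed

lemma A_in:
  assumes i: "i \<le> n0 G"
  shows "\<exists>v\<in>carrier_vec N. detach G i = pi_inv nr (H *\<^sub>v v)"
proof -
  have "i \<in> {nS G..n0 G}" using i by (simp add: nS0)
  from bspec[OF PD_D[unfolded PD_def] this] obtain w :: "nat \<Rightarrow> 'a bipoly" where
    w: "\<forall>j<length F. degree (w j) < D" "detach G i = (\<Sum>j<length F. w j * F ! j)" by auto
  define u where "u = vec N (\<lambda>c. coeff (w (c div D)) (D - 1 - c mod D))"
  have u: "u \<in> carrier_vec N" unfolding u_def by simp
  have Wq: "Wq D u q = w q" if q: "q < length F" for q
  proof -
    have "Wq D u q = (\<Sum>l<D. monom (coeff (w q) (D - Suc l)) (D - Suc l))"
      unfolding Wq_def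
    proof (rule sum.cong[OF refl])
      fix l assume l: "l \<in> {..<D}"
      have lt: "q * D + l < N"
      proof -
        have "q * D + l < q * D + D" using l by simp
        also have "\<dots> = Suc q * D" by simp
        also have "\<dots> \<le> length F * D" using q by (intro mult_right_mono) auto
        finally show ?thesis .
      qed
      have "(q * D + l) div D = q" "(q * D + l) mod D = l" using l by auto
      then show "monom (u $ (q * D + l)) (D - 1 - l) = monom (coeff (w q) (D - Suc l)) (D - Suc l)"
        using lt unfolding u_def by simp
    qed
    also have "\<dots> = (\<Sum>e<D. monom (coeff (w q) e) e)"
      by (rule sum.nat_diff_reindex)
    also have "\<dots> = (\<Sum>e\<le>D - 1. monom (coeff (w q) e) e)"
      using D_pos by (intro sum.cong) auto
    also have "\<dots> = w q" using w(1) q D_pos by (intro poly_as_sum_of_monoms') auto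
    finally show ?thesis .
  qed
  have "pi_inv nr (S *\<^sub>v u) = detach G i"
    unfolding L_S[OF degF u] w(2) using Wq by (intro sum.cong) auto
  moreover obtain V where V: "V \<in> carrier_mat N N" "S = H * V" using S_HV by blast
  moreover have "S *\<^sub>v u = H *\<^sub>v (V *\<^sub>v u)" unfolding V(2) using H_carrier V(1) u by (rule assoc_mult_mat_vec)
  ultimately show ?thesis using V(1) u by (intro bexI[of _ "V *\<^sub>v u"]) auto
qed


lemma pi_inv_minus: "a \<in> carrier_vec n \<Longrightarrow> b \<in> carrier_vec n \<Longrightarrow> pi_inv n (a - b) = pi_inv n a - pi_inv n b"
  by (intro poly_eqI) (auto simp: coeff_pi_inv)

lemma lc_monic_one: "degree (c :: 'a poly) = 0 \<Longrightarrow> lead_coeff c = 1 \<Longrightarrow> c = 1"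
  by (metis degree_0_id one_pCons)

lemma main_col:
  assumes i: "i \<le> n0 G"
  shows "\<exists>j0<K. piv H j0 = nr - 1 - i \<and> detach G i = pi_inv nr (col H j0)"
proof -
  define A where "A = detach G i"
  have PA: "Pinv i A" unfolding A_def using detach_inv[OF i] .
  then have AI: "A \<in> ideal_gen F" and degA: "degree A = i" and lcA: "lead_coeff A = lead_coeff (G ! kap i)"
    and redA: "\<And>m e. (m, e) \<in> monomials A \<Longrightarrow> m < i \<Longrightarrow> \<not> red G (m, e)"
    unfolding Pinv_def by auto
  have kG: "kap i < length G" by (rule kap_props(1))
  have lcA0: "lead_coeff A \<noteq> 0" using lcA G_basic(1)[OF kG] by simp
  have lclcA: "lead_coeff (lead_coeff A) = 1" using lcA G_basic(3)[OF kG] unfolding lcoeff_def by simp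
  obtain v where v: "v \<in> carrier_vec N" "A = pi_inv nr (H *\<^sub>v v)" using A_in[OF i] unfolding A_def by blast
  have ex: "\<exists>j. j < K \<and> v $ j \<noteq> 0"
  proof (rule ccontr)
    assume "\<not> ?thesis"
    then have "H *\<^sub>v v = 0\<^sub>v nr" using echelon_zero[OF v(1)] by auto
    then have "A = 0" using v(2) by (simp add: pi_inv_def)
    then show False using lcA0 by simp
  qed
  define j0 where "j0 = (LEAST j. j < K \<and> v $ j \<noteq> 0)"
  have j0: "j0 < K" "v $ j0 \<noteq> 0" using LeastI_ex[OF ex] unfolding j0_def by auto
  have z0: "\<forall>j<j0. v $ j = 0"
  proof (intro allI impI)
    fix j assume "j < j0"
    then have "\<not> (j < K \<and> v $ j \<noteq> 0)" unfolding j0_def using not_less_Least by blast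
    then show "v $ j = 0" using \<open>j < j0\<close> j0(1) by auto
  qed
  note ep = echelon_poly[OF v(1) j0(1) z0 j0(2), folded v(2)]
  have pn: "piv H j0 < nr" by (rule piv_props(1)[OF j0(1)])
  have piv0: "piv H j0 = nr - 1 - i" using ep(1) degA pn by linarith
  have inr: "i < nr" using piv0 pn degA ep(1) by linarith
  define p where "p = H $$ (piv H j0, j0)"
  have p0: "p \<noteq> 0" unfolding p_def by (rule piv_props(2)[OF j0(1)])
  have lcp: "lead_coeff p = 1" unfolding p_def by (rule K_props(4)[OF j0(1)])
  define h0 where "h0 = pi_inv nr (col H j0)"
  have j0N: "j0 < N" using j0(1) K_props(1) by simp
  have h0I: "h0 \<in> ideal_gen F" unfolding h0_def by (rule col_I[OF j0N])
  have h0deg: "degree h0 = i" and h0lc: "lead_coeff h0 = p"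
    using hcol[OF j0(1)] piv0 inr unfolding h0_def p_def by auto
  have h00: "h0 \<noteq> 0" using h0lc p0 by auto
  have "bb (kap i) \<le> degree p" using In_bb[OF h0I h00] h0deg h0lc by simp
  moreover have "degree (lead_coeff A) = bb (kap i)" using lcA by simp
  moreover have lcAeq: "lead_coeff A = p * v $ j0" using ep(2) unfolding p_def .
  moreover have "degree (p * v $ j0) = degree p + degree (v $ j0)" using p0 j0(2) by (rule degree_mult_eq)
  ultimately have dv: "degree (v $ j0) = 0" by (metis add_le_same_cancel1 le_zero_eq)
  have "lead_coeff (p * v $ j0) = lead_coeff p * lead_coeff (v $ j0)" by (rule lead_coeff_mult)
  then have "lead_coeff (v $ j0) = 1" using lclcA lcAeq lcp by simp
  then have v1: "v $ j0 = 1" using dv by (rule lc_monic_one[rotated])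
  define v' where "v' = vec N (\<lambda>j. if j = j0 then 0 else v $ j)"
  have v'c: "v' \<in> carrier_vec N" unfolding v'_def by simp
  have Hv: "H *\<^sub>v v = H *\<^sub>v v' + col H j0"
  proof (rule eq_vecI)
    show "dim_vec (H *\<^sub>v v) = dim_vec (H *\<^sub>v v' + col H j0)" using H_carrier by simp
    fix r assume "r < dim_vec (H *\<^sub>v v' + col H j0)"
    then have r: "r < nr" using H_carrier by simp
    have "(\<Sum>j<N. H $$ (r, j) * v $ j) = (\<Sum>j<N. H $$ (r, j) * v' $ j + (if j = j0 then H $$ (r, j0) else 0))"
      using v(1) v1 unfolding v'_def by (intro sum.cong) auto
    also have "\<dots> = (\<Sum>j<N. H $$ (r, j) * v' $ j) + H $$ (r, j0)"
      using j0N by (simp add: sum.distrib sum.delta')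
    finally show "(H *\<^sub>v v) $ r = (H *\<^sub>v v' + col H j0) $ r"
      using r H_carrier j0N by (simp add: mult_index[OF v(1) r] mult_index[OF v'c r])
  qed
  have zero: "\<forall>j<K. v' $ j = 0"
  proof (rule ccontr)
    assume "\<not> ?thesis"
    then have ex1: "\<exists>j. j < K \<and> v' $ j \<noteq> 0" by auto
    define j1 where "j1 = (LEAST j. j < K \<and> v' $ j \<noteq> 0)"
    have j1: "j1 < K" "v' $ j1 \<noteq> 0" using LeastI_ex[OF ex1] unfolding j1_def by auto
    have z1: "\<forall>j<j1. v' $ j = 0"
    proof (intro allI impI)
      fix j assume "j < j1"
      then have "\<not> (j < K \<and> v' $ j \<noteq> 0)" unfolding j1_def using not_less_Least by blast
      then show "v' $ j = 0" using \<open>j < j1\<close> j1(1) by auto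
    qed
    have j1N: "j1 < N" using j1(1) K_props(1) by simp
    have "j1 \<noteq> j0" using j1(2) j0N unfolding v'_def by auto
    moreover have "\<not> j1 < j0" using j1(2) z0 j1N unfolding v'_def by auto
    ultimately have j01: "j0 < j1" by simp
    have pp: "piv H j0 < piv H j1" by (rule K_props(3)[OF j01 j1(1)])
    have pn1: "piv H j1 < nr" by (rule piv_props(1)[OF j1(1)])
    define m where "m = nr - 1 - piv H j1"
    have mi: "m < i" unfolding m_def using pp pn1 piv0 inr by linarith
    define p1 where "p1 = H $$ (piv H j1, j1)"
    have p10: "p1 \<noteq> 0" unfolding p1_def by (rule piv_props(2)[OF j1(1)])
    define P' where "P' = pi_inv nr (H *\<^sub>v v')"
    note ep1 = echelon_poly[OF v'c j1(1) z1 j1(2), folded P'_def]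
    have lcP': "coeff P' m = p1 * v' $ j1" using ep1 unfolding m_def p1_def by simp
    have degP: "degree p1 \<le> degree (coeff P' m)"
      unfolding lcP' using p10 j1(2) by (simp add: degree_mult_eq)
    have cP'0: "coeff P' m \<noteq> 0" unfolding lcP' using p10 j1(2) by simp
    have Hc: "H *\<^sub>v v' = H *\<^sub>v v - col H j0" using Hv H_carrier v'c j0N by auto
    have "P' = A - h0" unfolding P'_def Hc v(2) h0_def
      using H_carrier v(1) j0N by (intro pi_inv_minus) auto
    then have cP': "coeff P' m = coeff A m - H $$ (piv H j1, j0)"
      unfolding h0_def using j0N pn1 by (simp add: coeff_hcol m_def)
    define h1 where "h1 = pi_inv nr (col H j1)"
    have h1I: "h1 \<in> ideal_gen F" unfolding h1_def by (rule col_I[OF j1N])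
    have h1deg: "degree h1 = m" and h1lc: "lead_coeff h1 = p1"
      using hcol[OF j1(1)] unfolding h1_def p1_def m_def by auto
    have "h1 \<noteq> 0" using h1lc p10 by auto
    then have bb1: "bb (kap m) \<le> degree p1" using In_bb[OF h1I] h1deg h1lc by simp
    have a1: "coeff A m = 0 \<or> degree (coeff A m) < degree p1"
    proof (cases "coeff A m = 0")
      case False
      then have "(m, degree (coeff A m)) \<in> monomials A" unfolding monomials_def by simp
      then have "\<not> red G (m, degree (coeff A m))" using redA mi by blast
      then have "degree (coeff A m) < bb (kap m)" by (rule notred_bound)
      then show ?thesis using bb1 by simp
    qed simp
    have a2: "H $$ (piv H j1, j0) = 0 \<or> degree (H $$ (piv H j1, j0)) < degree p1"
      unfolding p1_def by (rule K_props(5)[OF j1(1) j01])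
    have "degree (coeff P' m) < degree p1" unfolding cP'
      using small_diff[OF a1 a2] cP'0 cP' by simp
    then show False using degP by simp
  qed
  have "H *\<^sub>v v' = 0\<^sub>v nr" by (rule echelon_zero[OF v'c zero])
  then have "H *\<^sub>v v = col H j0" using Hv H_carrier j0N by auto
  then have "A = pi_inv nr (col H j0)" using v(2) by simp
  then show ?thesis using j0(1) piv0 unfolding A_def by blast
qed


lemma detach_lt: "i \<le> n0 G \<Longrightarrow> i < nr"
proof -
  assume i: "i \<le> n0 G"
  obtain j0 where "detach G i = pi_inv nr (col H j0)" using main_col[OF i] by blast
  moreover have "degree (pi_inv nr (col H j0)) < nr" using D_pos by (intro degree_pi_inv) simp
  ultimately have "degree (detach G i) < nr" by simp
  then show ?thesis using detach_inv[OF i] unfolding Pinv_def by simp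
qed

lemma col_index: "i \<le> n0 G \<Longrightarrow> i < K \<and> piv H (K - 1 - i) = nr - 1 - i \<and> detach G i = pi_inv nr (col H (K - 1 - i))"
proof (induction i)
  case 0
  obtain j where j: "j < K" "piv H j = nr - 1" "detach G 0 = pi_inv nr (col H j)"
    using main_col[OF 0] by auto
  have "j = K - 1"
  proof (rule ccontr)
    assume "j \<noteq> K - 1"
    then have "j < K - 1" using j(1) by simp
    then have "piv H j < piv H (K - 1)" using j(1) by (intro K_props(3)) auto
    moreover have "piv H (K - 1) < nr" using j(1) by (intro piv_props(1)) auto
    ultimately show False using j(2) by linarith
  qed
  then show ?case using j by auto
next
  case (Suc i)
  then have IH: "i < K" "piv H (K - 1 - i) = nr - 1 - i" by auto
  obtain j where j: "j < K" "piv H j = nr - 1 - Suc i" "detach G (Suc i) = pi_inv nr (col H j)"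
    using main_col[OF Suc.prems] by auto
  have lt: "Suc i < nr" using detach_lt[OF Suc.prems] .
  have jlt: "j < K - 1 - i"
  proof (rule ccontr)
    assume "\<not> ?thesis"
    then consider "j = K - 1 - i" | "K - 1 - i < j" by linarith
    then show False
    proof cases
      case 1 then show False using j(2) IH(2) lt by simp
    next
      case 2
      then have "piv H (K - 1 - i) < piv H j" using j(1) by (intro K_props(3))
      then show False using j(2) IH(2) lt by linarith
    qed
  qed
  have "j = K - 1 - Suc i"
  proof (rule ccontr)
    assume "j \<noteq> K - 1 - Suc i"
    then have a: "j < K - 1 - Suc i" using jlt by linarith
    have "piv H j < piv H (K - 1 - Suc i)" using a jlt IH(1) by (intro K_props(3)) auto
    moreover have "piv H (K - 1 - Suc i) < piv H (K - 1 - i)" using a jlt IH(1) by (intro K_props(3)) auto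
    ultimately show False using j(2) IH(2) lt by linarith
  qed
  then show ?case using j jlt by auto
qed

theorem main:
  "let K = nz_cols H;
       c = (\<lambda>k. pi_inv (dy + D) (col H (k - 1)));
       K' = (GREATEST k. 1 \<le> k \<and> k \<le> K \<and> lead_coeff (c k) = 1)
   in (\<exists>k. 1 \<le> k \<and> k \<le> K \<and> lead_coeff (c k) = 1) \<and>
      map c (rev [K'..<K+1]) = map (detach G) [nS G..<n0 G + 1] \<and>
      (\<forall>i\<le>n0 G. c (K - i) = detach G i)"
proof -
  define c where "c = (\<lambda>k. pi_inv (dy + D) (col H (k - 1)))"
  let ?n = "n0 G"
  have cK: "c (K - i) = detach G i" if "i \<le> ?n" for i
  proof -
    have "K - i - 1 = K - 1 - i" by simp
    then show ?thesis using col_index[OF that] unfolding c_def by simp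
  qed
  have nK: "?n < K" using col_index[of ?n] by simp
  have k0: "kap ?n = 0" using kap_props(3)[of 0 ?n] G_ne by (simp add: n0_def)
  have L: "lead_coeff (detach G ?n) = lead_coeff (G ! kap ?n)" using detach_inv[of ?n]
    unfolding Pinv_def by blast
  have mon: "lead_coeff (c (K - ?n)) = 1" by (simp only: cK[OF le_refl] L k0 lc0)
  have notmon: "lead_coeff (c k) \<noteq> 1" if "K - ?n < k" "k \<le> K" for k
  proof -
    define i where "i = K - k"
    have i: "i < ?n" "k = K - i" using that nK unfolding i_def by auto
    have "kap i \<noteq> 0"
    proof
      assume "kap i = 0"
      then show False using kap_props(2)[of i] i(1) by (simp add: n0_def)
    qed
    then have "lead_coeff (G ! kap i) \<noteq> 1" using kap_props(1) by (intro lc_ne1) auto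
    moreover have "lead_coeff (detach G i) = lead_coeff (G ! kap i)"
      using detach_inv[of i] i(1) unfolding Pinv_def by (meson less_imp_le)
    ultimately show ?thesis using cK[of i] i by simp
  qed
  have K': "(GREATEST k. 1 \<le> k \<and> k \<le> K \<and> lead_coeff (c k) = 1) = K - ?n"
  proof (rule Greatest_equality)
    show "1 \<le> K - ?n \<and> K - ?n \<le> K \<and> lead_coeff (c (K - ?n)) = 1" using nK mon by simp
    fix y assume "1 \<le> y \<and> y \<le> K \<and> lead_coeff (c y) = 1"
    then show "y \<le> K - ?n" using notmon[of y] by (meson not_le)
  qed
  have ex: "\<exists>k. 1 \<le> k \<and> k \<le> K \<and> lead_coeff (c k) = 1"
    using nK mon by (intro exI[of _ "K - ?n"]) simp
  have mp: "map c (rev [K - ?n..<K+1]) = map (detach G) [nS G..<?n + 1]"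
  proof (rule nth_equalityI)
    show "length (map c (rev [K - ?n..<K+1])) = length (map (detach G) [nS G..<?n + 1])"
      using nK by (simp add: nS0)
    fix l assume "l < length (map c (rev [K - ?n..<K+1]))"
    then have l: "l \<le> ?n" using nK by simp
    have "rev [K - ?n..<K+1] ! l = K - l"
    proof -
      have len: "length [K - ?n..<K+1] = ?n + 1" using nK by simp
      have "rev [K - ?n..<K+1] ! l = [K - ?n..<K+1] ! (?n - l)"
        using l len by (simp add: rev_nth del: upt_Suc)
      also have "\<dots> = K - ?n + (?n - l)" using l nK by (simp del: upt_Suc)
      also have "\<dots> = K - l" using l nK by simp
      finally show ?thesis .
    qed
    then show "map c (rev [K - ?n..<K+1]) ! l = map (detach G) [nS G..<?n + 1] ! l"
    proof -
      have len: "length [K - ?n..<K+1] = ?n + 1" using nK by simp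
      have "map c (rev [K - ?n..<K+1]) ! l = c (rev [K - ?n..<K+1] ! l)"
        using l len by (simp del: upt_Suc)
      also have "\<dots> = c (K - l)" unfolding \<open>rev [K - ?n..<K+1] ! l = K - l\<close> ..
      also have "\<dots> = detach G l" using cK[OF l] .
      also have "\<dots> = map (detach G) [nS G..<?n + 1] ! l" using l by (simp add: nS0 del: upt_Suc)
      finally show ?thesis .
    qed
  qed
  show ?thesis unfolding Let_def c_def[symmetric] K' using ex mp cK by blast
qed

end

theorem proposition1:
  fixes F G :: "'a::field bipoly list" and dy D :: nat and H :: "'a poly mat"
  assumes "length F \<ge> 2"
    and "\<forall>f\<in>set F. degree f \<le> dy"
    and "zero_dim (ideal_gen F)"
    and "reduced_lex_GB G (ideal_gen F)"
    and "D \<ge> Delta F G"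
    and "hermite_nf (S_mat F dy D) H"
  shows "let K = nz_cols H;
             c = (\<lambda>k. pi_inv (dy + D) (col H (k - 1)));
             K' = (GREATEST k. 1 \<le> k \<and> k \<le> K \<and> lead_coeff (c k) = 1)
         in (\<exists>k. 1 \<le> k \<and> k \<le> K \<and> lead_coeff (c k) = 1) \<and>
            map c (rev [K'..<K+1]) = map (detach G) [nS G..<n0 G + 1] \<and>
            (\<forall>i\<le>n0 G. c (K - i) = detach G i)"
proof -
  interpret setting F G dy D H
    by unfold_locales (use assms in auto)
  show ?thesis by (rule main)
qed

end
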